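(* Let $R$ be a real number with $|R|>1$, let $B\subset\mathbb{R}$ be a finite set with $0\in B$ and $N=\#B$, let $\tau_b(x)=R^{-1}(x+b)$ for $b\in B$, let $X_B$ be the attractor of $(\tau_b)_{b\in B}$, and let $(p_b)_{b\in B}$ be probabilities with $p_b\in(0,1)$ and $\sum_{b\in B}p_b=1$. Let $\mu=\mu_{B,p}$ be the invariant measure. Suppose $\mu$ is spectral and that there is no overlap, i.e. $\mu(\tau_b(X_B)\cap\tau_{b'}(X_B))=0$ for all $b\neq b'$ in $B$. Then $p_b=\frac1N$ for all $b\in B$.
   Context: The attractor $X_B$ is the unique nonempty compact set with $X_B=\bigcup_{b\in B}\tau_b(X_B)$. The invariant measure $\mu_{B,p}$ is the unique Borel probability measure with $\int f\,d\mu_{B,p}=\sum_{b\in B}p_b\int f\circ\tau_b\,d\mu_{B,p}$ for all continuous $f$; its support is $X_B$. With $e_\lambda(x)=e^{2\pi i\lambda x}$, a Borel probability measure $\mu$ is spectral if there is $\Lambda\subset\mathbb{R}$ such that $\{e_\lambda\}_{\lambda\in\Lambda}$ is an orthogonal basis of $L^2(\mu)$. *)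

theory Defs
  imports "HOL-Probability.Probability"
begin

definition tau :: "real \<Rightarrow> real \<Rightarrow> real \<Rightarrow> real" where
  "tau R b x = (x + b) / R"

definition ifs_attractor :: "real \<Rightarrow> real set \<Rightarrow> real set \<Rightarrow> bool" where
  "ifs_attractor R B X \<longleftrightarrow> X \<noteq> {} \<and> compact X \<and> X = (\<Union>b\<in>B. tau R b ` X)"

definition ifs_invariant_measure ::
  "real \<Rightarrow> real set \<Rightarrow> (real \<Rightarrow> real) \<Rightarrow> real measure \<Rightarrow> bool" where
  "ifs_invariant_measure R B p \<mu> \<longleftrightarrow>
     prob_space \<mu> \<and> sets \<mu> = sets borel \<and>
     (\<forall>f :: real \<Rightarrow> real. continuous_on UNIV f \<longrightarrow>
        (\<integral>x. f x \<partial>\<mu>) = (\<Sum>b\<in>B. p b * (\<integral>x. f (tau R b x) \<partial>\<mu>)))"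

definition e_exp :: "real \<Rightarrow> real \<Rightarrow> complex" where
  "e_exp l x = exp (2 * of_real pi * \<i> * of_real (l * x))"

text \<open>Spectral measure: some family {e_lambda}_{lambda in Lambda} is an orthogonal basis
  of L^2(mu), i.e. it is pairwise orthogonal in L^2(mu) and complete (the only
  L^2 function orthogonal to all of them is 0 mu-a.e.).  Each e_lambda has
  modulus 1, hence norm 1 in L^2(mu) for a probability measure.\<close>
definition spectral_measure :: "real measure \<Rightarrow> bool" where
  "spectral_measure \<mu> \<longleftrightarrow>
     (\<exists>\<Lambda> :: real set.
        (\<forall>l\<in>\<Lambda>. \<forall>l'\<in>\<Lambda>. l \<noteq> l' \<longrightarrow>
            (\<integral>x. e_exp l x * cnj (e_exp l' x) \<partial>\<mu>) = 0) \<and>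
        (\<forall>f :: real \<Rightarrow> complex.
            f \<in> borel_measurable \<mu> \<and> integrable \<mu> (\<lambda>x. (cmod (f x))\<^sup>2) \<and>
            (\<forall>l\<in>\<Lambda>. (\<integral>x. f x * cnj (e_exp l x) \<partial>\<mu>) = 0)
            \<longrightarrow> (AE x in \<mu>. f x = 0)))"

end

theory Submission
  imports Defs
begin


lemma borel_measurable_cnj'[measurable (raw)]:
  assumes f: "f \<in> borel_measurable M"
  shows "(\<lambda>x. cnj (f x :: complex)) \<in> borel_measurable M"
  by (intro borel_measurable_continuous_on[OF _ f] continuous_intros)

context prob_space begin

definition "bnd u \<longleftrightarrow> u \<in> borel_measurable M \<and> (\<exists>K. \<forall>x. cmod (u x) \<le> K)"

lemma bnd_integrable: "bnd u \<Longrightarrow> integrable M u"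
  unfolding bnd_def by (auto intro: integrable_const_bound)

lemma bnd_add: "bnd u \<Longrightarrow> bnd v \<Longrightarrow> bnd (\<lambda>x. u x + v x)"
  unfolding bnd_def apply auto
  subgoal for K K' by (rule exI[of _ "K+K'"]) (metis add_mono norm_triangle_le)
  done
lemma bnd_diff: "bnd u \<Longrightarrow> bnd v \<Longrightarrow> bnd (\<lambda>x. u x - v x)"
  unfolding bnd_def apply auto
  subgoal for K K' by (rule exI[of _ "K+K'"]) (metis add_mono norm_triangle_ineq4 order_trans)
  done
lemma bnd_mult: "bnd u \<Longrightarrow> bnd v \<Longrightarrow> bnd (\<lambda>x. u x * v x)"
  unfolding bnd_def apply auto
  subgoal for K K' apply (rule exI[of _ "K*K'"]) by (simp add: norm_mult mult_mono')
  done
lemma bnd_cnj: "bnd u \<Longrightarrow> bnd (\<lambda>x. cnj (u x))"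
  unfolding bnd_def by (auto, measurable)
lemma bnd_const: "bnd (\<lambda>x. c)"
  unfolding bnd_def by auto
lemma bnd_sum: "(\<And>i. i \<in> F \<Longrightarrow> bnd (u i)) \<Longrightarrow> bnd (\<lambda>x. \<Sum>i\<in>F. u i x)"
proof (induction F rule: infinite_finite_induct)
  case (insert i F) then show ?case by (simp add: bnd_add)
qed (auto simp: bnd_const)

end

locale onb = prob_space +
  fixes E :: "real \<Rightarrow> 'a \<Rightarrow> complex" and \<Lambda> :: "real set"
  assumes Em[measurable]: "\<And>l. E l \<in> borel_measurable M"
    and En: "\<And>l x. cmod (E l x) = 1"
    and orth: "\<forall>l\<in>\<Lambda>. \<forall>l'\<in>\<Lambda>. l \<noteq> l' \<longrightarrow> (\<integral>x. E l x * cnj (E l' x) \<partial>M) = 0"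
begin

definition "co u l = (\<integral>x. u x * cnj (E l x) \<partial>M)"

lemma bndE: "bnd (E l)" unfolding bnd_def using En by auto

lemma EE: "(\<integral>x. E l x * cnj (E l x) \<partial>M) = 1"
proof -
  have "\<And>x. E l x * cnj (E l x) = 1"
    by (metis En complex_norm_square of_real_1 power_one)
  then show ?thesis by (simp add: prob_space)
qed

lemma EE': "l \<in> \<Lambda> \<Longrightarrow> l' \<in> \<Lambda> \<Longrightarrow> (\<integral>x. E l x * cnj (E l' x) \<partial>M) = (if l = l' then 1 else 0)"
  using orth EE by auto

lemma expand:
  assumes u: "bnd u" and F: "finite F" "F \<subseteq> \<Lambda>"
  shows "(\<integral>x. (cmod (u x - (\<Sum>l\<in>F. d l * E l x)))\<^sup>2 \<partial>M)
     = (\<integral>x. (cmod (u x))\<^sup>2 \<partial>M) - 2 * Re (\<Sum>l\<in>F. cnj (d l) * co u l) + (\<Sum>l\<in>F. (cmod (d l))\<^sup>2)"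
proof -
  define v where "v x = (\<Sum>l\<in>F. d l * E l x)" for x
  have bv: "bnd v" unfolding v_def by (intro bnd_sum bnd_mult bnd_const bndE)
  have i1: "(\<integral>x. u x * cnj (v x) \<partial>M) = (\<Sum>l\<in>F. cnj (d l) * co u l)"
  proof -
    have "(\<integral>x. u x * cnj (v x) \<partial>M) = (\<integral>x. (\<Sum>l\<in>F. cnj (d l) * (u x * cnj (E l x))) \<partial>M)"
      unfolding v_def by (simp add: sum_distrib_left mult_ac)
    also have "\<dots> = (\<Sum>l\<in>F. cnj (d l) * co u l)"
      unfolding co_def
      by (subst Bochner_Integration.integral_sum[where f="\<lambda>l x. cnj (d l) * (u x * cnj (E l x))"])
         (auto intro!: bnd_integrable bnd_mult bnd_const bnd_cnj bndE u)
    finally show ?thesis .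
  qed
  have i2: "(\<integral>x. v x * cnj (v x) \<partial>M) = (\<Sum>l\<in>F. of_real ((cmod (d l))\<^sup>2))"
  proof -
    have "(\<integral>x. v x * cnj (v x) \<partial>M) = (\<integral>x. (\<Sum>l\<in>F. \<Sum>l'\<in>F. d l * cnj (d l') * (E l x * cnj (E l' x))) \<partial>M)"
      unfolding v_def apply (simp add: sum_distrib_left sum_distrib_right mult_ac)
      apply (rule Bochner_Integration.integral_cong[OF refl])
      apply (rule sum.swap) done
    also have "\<dots> = (\<Sum>l\<in>F. \<Sum>l'\<in>F. d l * cnj (d l') * (\<integral>x. E l x * cnj (E l' x) \<partial>M))"
      apply (subst Bochner_Integration.integral_sum[where f="\<lambda>l x. \<Sum>l'\<in>F. d l * cnj (d l') * (E l x * cnj (E l' x))"])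
       apply (rule bnd_integrable, intro bnd_sum bnd_mult bnd_const bnd_cnj bndE)
      apply (intro sum.cong refl)
      apply (subst Bochner_Integration.integral_sum[where f="\<lambda>l' x. d _ * cnj (d l') * (E _ x * cnj (E l' x))"])
       apply (intro bnd_integrable bnd_mult bnd_const bnd_cnj bndE)
      apply simp
      done
    also have "\<dots> = (\<Sum>l\<in>F. \<Sum>l'\<in>F. if l' = l then d l * cnj (d l) else 0)"
      using F by (intro sum.cong refl) (auto simp: EE' subsetD)
    also have "\<dots> = (\<Sum>l\<in>F. of_real ((cmod (d l))\<^sup>2))"
      using F by (simp, intro sum.cong refl, metis complex_norm_square of_real_power)
    finally show ?thesis .
  qed
  have "complex_of_real (\<integral>x. (cmod (u x - v x))\<^sup>2 \<partial>M) = (\<integral>x. (u x - v x) * cnj (u x - v x) \<partial>M)"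
    by (simp only: integral_complex_of_real[symmetric] complex_norm_square)
  also have "\<dots> = (\<integral>x. u x * cnj (u x) - u x * cnj (v x) - cnj (u x * cnj (v x)) + v x * cnj (v x) \<partial>M)"
    by (intro Bochner_Integration.integral_cong) (auto simp: algebra_simps)
  also have "\<dots> = (\<integral>x. u x * cnj (u x) \<partial>M) - (\<integral>x. u x * cnj (v x) \<partial>M) - cnj (\<integral>x. u x * cnj (v x) \<partial>M) + (\<integral>x. v x * cnj (v x) \<partial>M)"
    using u bv by (simp add: bnd_integrable bnd_mult bnd_cnj bnd_diff bnd_add del: complex_cnj_mult)
  also have "(\<integral>x. u x * cnj (u x) \<partial>M) = of_real (\<integral>x. (cmod (u x))\<^sup>2 \<partial>M)"
    by (simp only: integral_complex_of_real[symmetric] complex_norm_square)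
  finally have "complex_of_real (\<integral>x. (cmod (u x - v x))\<^sup>2 \<partial>M) = of_real (\<integral>x. (cmod (u x))\<^sup>2 \<partial>M)
      - (\<Sum>l\<in>F. cnj (d l) * co u l) - cnj (\<Sum>l\<in>F. cnj (d l) * co u l) + (\<Sum>l\<in>F. of_real ((cmod (d l))\<^sup>2))"
    using i1 i2 by simp
  then have "Re (complex_of_real (\<integral>x. (cmod (u x - v x))\<^sup>2 \<partial>M)) = Re (of_real (\<integral>x. (cmod (u x))\<^sup>2 \<partial>M)
      - (\<Sum>l\<in>F. cnj (d l) * co u l) - cnj (\<Sum>l\<in>F. cnj (d l) * co u l) + (\<Sum>l\<in>F. of_real ((cmod (d l))\<^sup>2)))"
    by simp
  then show ?thesis unfolding v_def by (simp add: Re_sum)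
qed

end




context onb begin

lemma int_sq_nonneg: "0 \<le> (\<integral>x. (cmod (u x))\<^sup>2 \<partial>M)"
  by (rule integral_nonneg_AE) auto

lemma expand_self:
  assumes u: "bnd u" and F: "finite F" "F \<subseteq> \<Lambda>"
  shows "(\<integral>x. (cmod (u x - (\<Sum>l\<in>F. co u l * E l x)))\<^sup>2 \<partial>M)
     = (\<integral>x. (cmod (u x))\<^sup>2 \<partial>M) - (\<Sum>l\<in>F. (cmod (co u l))\<^sup>2)"
proof -
  have "Re (\<Sum>l\<in>F. cnj (co u l) * co u l) = (\<Sum>l\<in>F. (cmod (co u l))\<^sup>2)"
    unfolding Re_sum by (intro sum.cong refl) (metis Re_complex_of_real complex_norm_square mult.commute)
  then show ?thesis using expand[OF u F, of "co u"] by simp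
qed

lemma bessel:
  assumes u: "bnd u" and F: "finite F" "F \<subseteq> \<Lambda>"
  shows "(\<Sum>l\<in>F. (cmod (co u l))\<^sup>2) \<le> (\<integral>x. (cmod (u x))\<^sup>2 \<partial>M)"
  using expand_self[OF assms] int_sq_nonneg[of "\<lambda>x. u x - (\<Sum>l\<in>F. co u l * E l x)"] by simp

lemma expand_zero:
  assumes F: "finite F" "F \<subseteq> \<Lambda>"
  shows "(\<integral>x. (cmod (\<Sum>l\<in>F. d l * E l x))\<^sup>2 \<partial>M) = (\<Sum>l\<in>F. (cmod (d l))\<^sup>2)"
proof -
  have "co (\<lambda>x. 0) l = 0" for l unfolding co_def by simp
  then show ?thesis using expand[OF bnd_const F, of 0 d] by (simp add: norm_minus_commute)
qed

definition "N2 u = (\<integral>\<^sup>+x. ennreal ((cmod (u x))\<^sup>2) \<partial>M)"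

lemma N2_bnd: assumes "bnd u" shows "N2 u = ennreal (\<integral>x. (cmod (u x))\<^sup>2 \<partial>M)"
proof -
  from assms obtain K where m: "u \<in> borel_measurable M" and K: "\<And>x. cmod (u x) \<le> K"
    unfolding bnd_def by auto
  have "integrable M (\<lambda>x. (cmod (u x))\<^sup>2)"
    apply (rule integrable_const_bound[where B="K^2"])
    using K apply (auto intro!: power_mono)
    using m by measurable
  then show ?thesis unfolding N2_def by (intro nn_integral_eq_integral) auto
qed

lemma L1_bound:
  assumes m: "u \<in> borel_measurable M" and e: "e > 0" and N: "N2 u \<le> ennreal (e\<^sup>2)"
  shows "(\<integral>\<^sup>+x. ennreal (cmod (u x)) \<partial>M) \<le> ennreal e"
proof -
  have pt: "ennreal (cmod (u x)) \<le> ennreal (e/2) + ennreal (1/(2*e)) * ennreal ((cmod (u x))\<^sup>2)" for x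
  proof -
    have "cmod (u x) \<le> e/2 + 1/(2*e) * (cmod (u x))\<^sup>2"
    proof -
      have "0 \<le> (cmod (u x) - e)\<^sup>2" by simp
      then have "2 * e * cmod (u x) \<le> e\<^sup>2 + (cmod (u x))\<^sup>2" by (simp add: power2_diff algebra_simps)
      then show ?thesis using e by (simp add: field_simps power2_eq_square)
    qed
    then show ?thesis using e by (simp add: ennreal_plus[symmetric] ennreal_mult[symmetric] del: ennreal_plus)
  qed
  have "(\<integral>\<^sup>+x. ennreal (cmod (u x)) \<partial>M) \<le> (\<integral>\<^sup>+x. ennreal (e/2) + ennreal (1/(2*e)) * ennreal ((cmod (u x))\<^sup>2) \<partial>M)"
    by (intro nn_integral_mono pt)
  also have "\<dots> = ennreal (e/2) + ennreal (1/(2*e)) * N2 u"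
    unfolding N2_def using m
    by (subst nn_integral_add) (auto simp: nn_integral_cmult emeasure_space_1)
  also have "\<dots> \<le> ennreal (e/2) + ennreal (1/(2*e)) * ennreal (e\<^sup>2)"
    by (intro add_left_mono mult_left_mono N) auto
  also have "\<dots> = ennreal e"
    using e by (simp add: ennreal_plus[symmetric] ennreal_mult[symmetric] del: ennreal_plus)
       (simp add: field_simps power2_eq_square)
  finally show ?thesis .
qed

lemma co_sum: assumes "finite F" "F \<subseteq> \<Lambda>" "l \<in> \<Lambda>"
  shows "co (\<lambda>x. \<Sum>l'\<in>F. d l' * E l' x) l = (if l \<in> F then d l else 0)"
proof -
  have "co (\<lambda>x. \<Sum>l'\<in>F. d l' * E l' x) l = (\<Sum>l'\<in>F. d l' * (\<integral>x. E l' x * cnj (E l x) \<partial>M))"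
    unfolding co_def apply (simp add: sum_distrib_right mult.assoc)
    apply (subst Bochner_Integration.integral_sum[where f="\<lambda>l' x. d l' * (E l' x * cnj (E l x))"])
     apply (intro bnd_integrable bnd_mult bnd_const bnd_cnj bndE)
    apply simp done
  also have "\<dots> = (\<Sum>l'\<in>F. if l' = l then d l else 0)"
    using assms by (intro sum.cong refl) (auto simp: EE' subsetD)
  also have "\<dots> = (if l \<in> F then d l else 0)" using assms by simp
  finally show ?thesis .
qed

lemma co_diff: assumes "bnd u" "bnd v" shows "co (\<lambda>x. u x - v x) l = co u l - co v l"
  unfolding co_def left_diff_distrib
  by (rule Bochner_Integration.integral_diff) (intro bnd_integrable bnd_mult bnd_cnj bndE assms)+

end

lemma sq_tri: "(cmod (a - b))\<^sup>2 \<le> 2*(cmod a)\<^sup>2 + 2*(cmod b)\<^sup>2"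
proof -
  have "cmod (a - b) \<le> cmod a + cmod b" by (rule norm_triangle_ineq4)
  then have "(cmod (a - b))\<^sup>2 \<le> (cmod a + cmod b)\<^sup>2" by (intro power_mono) auto
  also have "\<dots> \<le> 2*(cmod a)\<^sup>2 + 2*(cmod b)\<^sup>2"
    using sum_squares_ge_zero[of "cmod a - cmod b" 0] by (simp add: power2_eq_square algebra_simps)
  finally show ?thesis .
qed




context onb begin

lemma parseval:
  assumes compl: "\<forall>h. h \<in> borel_measurable M \<and> integrable M (\<lambda>x. (cmod (h x))\<^sup>2) \<and>
            (\<forall>l\<in>\<Lambda>. (\<integral>x. h x * cnj (E l x) \<partial>M) = 0) \<longrightarrow> (AE x in M. h x = 0)"
    and f: "bnd f"
  shows "((\<lambda>l. (cmod (co f l))\<^sup>2) has_sum (\<integral>x. (cmod (f x))\<^sup>2 \<partial>M)) \<Lambda>"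
proof -
  define w where "w l = (cmod (co f l))\<^sup>2" for l
  define A where "A = (\<integral>x. (cmod (f x))\<^sup>2 \<partial>M)"
  have wnn: "0 \<le> w l" for l unfolding w_def by simp
  have bes: "finite F \<Longrightarrow> F \<subseteq> \<Lambda> \<Longrightarrow> sum w F \<le> A" for F
    unfolding w_def A_def by (rule bessel[OF f])
  have summ: "w summable_on \<Lambda>"
    by (rule nonneg_bdd_above_summable_on) (auto simp: wnn bdd_above_def intro!: exI[of _ A] bes)
  define S where "S = infsum w \<Lambda>"
  have SA: "S \<le> A" unfolding S_def by (rule infsum_le_finite_sums[OF summ bes])
  have fin_le: "finite G \<Longrightarrow> G \<subseteq> \<Lambda> \<Longrightarrow> sum w G \<le> S" for G
  proof -
    assume G: "finite G" "G \<subseteq> \<Lambda>"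
    have "infsum w G \<le> infsum w \<Lambda>"
      by (rule infsum_mono2[OF _ summ]) (use G wnn in auto)
    then show ?thesis using G unfolding S_def by simp
  qed
  have approx: "\<exists>F. finite F \<and> F \<subseteq> \<Lambda> \<and> S - (1/4)^k < sum w F" for k :: nat
  proof -
    have "S = (SUP F\<in>{F. finite F \<and> F \<subseteq> \<Lambda>}. sum w F)"
      unfolding S_def by (rule infsum_nonneg_is_SUPREMUM_real[OF summ wnn])
    moreover have "S - (1/4)^k < S" by simp
    ultimately have "S - (1/4)^k < (SUP F\<in>{F. finite F \<and> F \<subseteq> \<Lambda>}. sum w F)" by simp
    then show ?thesis
      by (subst (asm) less_cSUP_iff) (auto simp: bdd_above_def intro!: exI[of _ S] fin_le)
  qed
  then obtain Fc where Fc: "\<And>k. finite (Fc k) \<and> Fc k \<subseteq> \<Lambda> \<and> S - (1/4)^k < sum w (Fc k)"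
    by metis
  define F where "F k = (\<Union>j\<le>k. Fc j)" for k
  have Ffin: "finite (F k)" and FL: "F k \<subseteq> \<Lambda>" for k
    unfolding F_def using Fc by auto
  have Fmono: "k \<le> j \<Longrightarrow> F k \<subseteq> F j" for k j unfolding F_def by fastforce
  have Fbig: "S - (1/4)^k < sum w (F k)" for k
  proof -
    have "sum w (Fc k) \<le> sum w (F k)"
      by (rule sum_mono2[OF Ffin]) (auto simp: F_def wnn)
    with Fc[of k] show ?thesis by simp
  qed
  have tail: "finite H \<Longrightarrow> H \<subseteq> \<Lambda> \<Longrightarrow> H \<inter> F k = {} \<Longrightarrow> sum w H \<le> (1/4)^k" for H k
  proof -
    assume H: "finite H" "H \<subseteq> \<Lambda>" "H \<inter> F k = {}"
    have "sum w H + sum w (F k) = sum w (H \<union> F k)"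
      using H Ffin by (simp add: sum.union_disjoint)
    also have "\<dots> \<le> S" using H Ffin FL by (intro fin_le) auto
    finally show ?thesis using Fbig[of k] by simp
  qed
  have q4: "((1/2::real)^k)\<^sup>2 = (1/4)^k" for k
    by (simp add: power2_eq_square flip: power_mult_distrib)
  have fm[measurable]: "f \<in> borel_measurable M" using f unfolding bnd_def by auto
  define G where "G k x = (\<Sum>l\<in>F k. co f l * E l x)" for k x
  have bG: "bnd (G k)" for k unfolding G_def by (intro bnd_sum bnd_mult bnd_const bndE)
  have Gm[measurable]: "G k \<in> borel_measurable M" for k using bG unfolding bnd_def by auto
  have Gdiff: "N2 (\<lambda>x. G j x - G k x) \<le> ennreal (((1/2)^k)\<^sup>2)" if kj: "k \<le> j" for k j
  proof -
    have eq: "G j x - G k x = (\<Sum>l\<in>F j - F k. co f l * E l x)" for x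
      unfolding G_def using Fmono[OF kj] Ffin by (simp add: sum_diff)
    have N: "N2 (\<lambda>x. G j x - G k x) = ennreal (\<integral>x. (cmod (G j x - G k x))\<^sup>2 \<partial>M)"
      by (rule N2_bnd) (intro bnd_diff bG)
    have "(\<integral>x. (cmod (G j x - G k x))\<^sup>2 \<partial>M) = sum w (F j - F k)"
      unfolding eq w_def using Ffin FL by (intro expand_zero) auto
    also have "sum w (F j - F k) \<le> (1/4)^k"
      using Ffin FL by (intro tail) auto
    finally show ?thesis unfolding N q4 by (rule ennreal_leI)
  qed
  define D where "D k x = G (Suc k) x - G k x" for k x
  have Dm[measurable]: "D k \<in> borel_measurable M" for k unfolding D_def by measurable
  have D1: "(\<integral>\<^sup>+x. ennreal (cmod (D k x)) \<partial>M) \<le> ennreal ((1/2)^k)" for k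
    unfolding D_def by (rule L1_bound) (auto intro: Gdiff)
  have "(\<integral>\<^sup>+x. (\<Sum>k. ennreal (cmod (D k x))) \<partial>M) = (\<Sum>k. \<integral>\<^sup>+x. ennreal (cmod (D k x)) \<partial>M)"
    by (rule nn_integral_suminf) measurable
  also have "\<dots> \<le> (\<Sum>k. ennreal ((1/2)^k))"
    by (intro suminf_le D1) auto
  also have "\<dots> = ennreal 2"
    by (subst suminf_ennreal2) (auto simp: suminf_geometric)
  finally have "(\<integral>\<^sup>+x. (\<Sum>k. ennreal (cmod (D k x))) \<partial>M) \<noteq> \<infinity>"
    by (auto simp: top_unique)
  then have AEsum: "AE x in M. (\<Sum>k. ennreal (cmod (D k x))) \<noteq> \<infinity>"
    by (intro nn_integral_PInf_AE) measurable
  define g where "g x = lim (\<lambda>k. G k x)" for x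
  have gm[measurable]: "g \<in> borel_measurable M" unfolding g_def by measurable
  have conv: "AE x in M. (\<lambda>k. G k x) \<longlonglongrightarrow> g x"
    using AEsum
  proof eventually_elim
    case (elim x)
    have "summable (\<lambda>k. cmod (D k x))" by (rule summable_suminf_not_top) (use elim in auto)
    then have "summable (\<lambda>k. D k x)" by (rule summable_norm_cancel)
    then have "(\<lambda>n. \<Sum>k<n. D k x) \<longlonglongrightarrow> (\<Sum>k. D k x)" by (rule summable_LIMSEQ)
    then have "(\<lambda>n. G 0 x + (\<Sum>k<n. D k x)) \<longlonglongrightarrow> G 0 x + (\<Sum>k. D k x)" by (intro tendsto_add tendsto_const)
    moreover have "G 0 x + (\<Sum>k<n. D k x) = G n x" for n unfolding D_def sum_lessThan_telescope[of "\<lambda>k. G k x"] by simp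
    ultimately have "convergent (\<lambda>n. G n x)" by (auto simp: convergent_def)
    then show ?case unfolding g_def by (simp add: convergent_LIMSEQ_iff)
  qed
  have Ng: "N2 (\<lambda>x. g x - G k x) \<le> ennreal (((1/2)^k)\<^sup>2)" for k
  proof -
    have "N2 (\<lambda>x. g x - G k x) = (\<integral>\<^sup>+x. liminf (\<lambda>j. ennreal ((cmod (G j x - G k x))\<^sup>2)) \<partial>M)"
      unfolding N2_def
    proof (intro nn_integral_cong_AE)
      show "AE x in M. ennreal ((cmod (g x - G k x))\<^sup>2) = liminf (\<lambda>j. ennreal ((cmod (G j x - G k x))\<^sup>2))"
        using conv
      proof eventually_elim
        case (elim x)
        have "(\<lambda>j. ennreal ((cmod (G j x - G k x))\<^sup>2)) \<longlonglongrightarrow> ennreal ((cmod (g x - G k x))\<^sup>2)"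
          by (intro tendsto_ennrealI tendsto_intros elim)
        from lim_imp_Liminf[OF _ this] show ?case by simp
      qed
    qed
    also have "\<dots> \<le> liminf (\<lambda>j. N2 (\<lambda>x. G j x - G k x))"
      unfolding N2_def by (rule nn_integral_liminf) measurable
    also have "\<dots> \<le> ennreal (((1/2)^k)\<^sup>2)"
      by (rule Liminf_le) (auto intro!: eventually_sequentiallyI[of k] Gdiff)
    finally show ?thesis .
  qed
  have hsq: "integrable M (\<lambda>x. (cmod (f x - g x))\<^sup>2)"
  proof (subst integrable_iff_bounded, intro conjI)
    show "(\<lambda>x. (cmod (f x - g x))\<^sup>2) \<in> borel_measurable M" by measurable
    have "(\<integral>\<^sup>+x. ennreal (norm ((cmod (f x - g x))\<^sup>2)) \<partial>M)
        \<le> (\<integral>\<^sup>+x. 2 * ennreal ((cmod (f x - G 0 x))\<^sup>2) + 2 * ennreal ((cmod (g x - G 0 x))\<^sup>2) \<partial>M)"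
    proof (intro nn_integral_mono)
      fix x
      have "(cmod ((f x - G 0 x) - (g x - G 0 x)))\<^sup>2 \<le> 2*(cmod (f x - G 0 x))\<^sup>2 + 2*(cmod (g x - G 0 x))\<^sup>2"
        by (rule sq_tri)
      then have "ennreal (norm ((cmod (f x - g x))\<^sup>2)) \<le> ennreal (2*(cmod (f x - G 0 x))\<^sup>2 + 2*(cmod (g x - G 0 x))\<^sup>2)"
        by (intro ennreal_leI) simp
      then show "ennreal (norm ((cmod (f x - g x))\<^sup>2)) \<le> 2 * ennreal ((cmod (f x - G 0 x))\<^sup>2) + 2 * ennreal ((cmod (g x - G 0 x))\<^sup>2)"
        by (simp add: ennreal_plus ennreal_mult)
    qed
    also have "\<dots> = 2 * N2 (\<lambda>x. f x - G 0 x) + 2 * N2 (\<lambda>x. g x - G 0 x)"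
      unfolding N2_def by (subst nn_integral_add) (auto simp: nn_integral_cmult)
    also have "\<dots> < \<infinity>"
    proof -
      have a: "N2 (\<lambda>x. f x - G 0 x) \<noteq> \<infinity>" using N2_bnd[OF bnd_diff[OF f bG[of 0]]] by simp
      have b: "N2 (\<lambda>x. g x - G 0 x) \<noteq> \<infinity>"
      proof
        assume "N2 (\<lambda>x. g x - G 0 x) = \<infinity>"
        with Ng[of 0] show False by (simp add: top_unique)
      qed
      show ?thesis using a b by (simp add: ennreal_mult_less_top less_top)
    qed
    finally show "(\<integral>\<^sup>+x. ennreal (norm ((cmod (f x - g x))\<^sup>2)) \<partial>M) < \<infinity>" .
  qed
  have small: "z = 0" if "\<And>k::nat. cmod z \<le> 2 * (1/2)^k" for z :: complex
  proof (rule ccontr)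
    assume "z \<noteq> 0"
    then have "cmod z / 2 > 0" by simp
    from real_arch_pow_inv[OF this, of "1/2"] obtain k where "(1/2::real)^k < cmod z / 2" by auto
    with that[of k] show False by simp
  qed
  have hperp: "\<forall>l\<in>\<Lambda>. (\<integral>x. (f x - g x) * cnj (E l x) \<partial>M) = 0"
  proof
    fix l assume l: "l \<in> \<Lambda>"
    show "(\<integral>x. (f x - g x) * cnj (E l x) \<partial>M) = 0"
    proof (rule small)
      fix k :: nat
      have gG1: "(\<integral>\<^sup>+x. ennreal (cmod (g x - G k x)) \<partial>M) \<le> ennreal ((1/2)^k)"
        by (rule L1_bound[OF _ _ Ng]) auto
      have int2: "integrable M (\<lambda>x. (g x - G k x) * cnj (E l x))"
      proof (subst integrable_iff_bounded, intro conjI)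
        show "(\<lambda>x. (g x - G k x) * cnj (E l x)) \<in> borel_measurable M" by measurable
        have "(\<integral>\<^sup>+x. ennreal (norm ((g x - G k x) * cnj (E l x))) \<partial>M) = (\<integral>\<^sup>+x. ennreal (cmod (g x - G k x)) \<partial>M)"
          by (simp add: norm_mult En)
        also have "\<dots> < \<infinity>" using gG1 by (simp add: le_less_trans)
        finally show "(\<integral>\<^sup>+x. ennreal (norm ((g x - G k x) * cnj (E l x))) \<partial>M) < \<infinity>" .
      qed
      have int1: "integrable M (\<lambda>x. (f x - G k x) * cnj (E l x))"
        by (intro bnd_integrable bnd_mult bnd_diff bnd_cnj f bG bndE)
      have split: "(\<integral>x. (f x - g x) * cnj (E l x) \<partial>M) = co (\<lambda>x. f x - G k x) l - (\<integral>x. (g x - G k x) * cnj (E l x) \<partial>M)"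
        unfolding co_def
        by (subst Bochner_Integration.integral_diff[OF int1 int2, symmetric]) (simp add: algebra_simps)
      have c1: "cmod (co (\<lambda>x. f x - G k x) l) \<le> (1/2)^k"
      proof -
        have "co (\<lambda>x. f x - G k x) l = co f l - (if l \<in> F k then co f l else 0)"
          using co_diff[OF f bG[of k], of l] co_sum[OF Ffin FL l, of "co f"] unfolding G_def by simp
        moreover have "cmod (co f l) \<le> (1/2)^k" if "l \<notin> F k"
        proof -
          have "w l \<le> (1/4)^k" using tail[of "{l}" k] l that by auto
          then have "(cmod (co f l))\<^sup>2 \<le> ((1/2)^k)\<^sup>2" unfolding w_def q4 .
          then show ?thesis by (rule power2_le_imp_le) simp
        qed
        ultimately show ?thesis by auto
      qed
      have c2: "cmod (\<integral>x. (g x - G k x) * cnj (E l x) \<partial>M) \<le> (1/2)^k"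
      proof -
        have "ennreal (cmod (\<integral>x. (g x - G k x) * cnj (E l x) \<partial>M)) \<le> (\<integral>\<^sup>+x. ennreal (norm ((g x - G k x) * cnj (E l x))) \<partial>M)"
          by (rule integral_norm_bound_ennreal[OF int2])
        also have "\<dots> = (\<integral>\<^sup>+x. ennreal (cmod (g x - G k x)) \<partial>M)"
          by (simp add: norm_mult En)
        also have "\<dots> \<le> ennreal ((1/2)^k)" by (rule gG1)
        finally show ?thesis by (simp add: ennreal_le_iff)
      qed
      show "cmod (\<integral>x. (f x - g x) * cnj (E l x) \<partial>M) \<le> 2 * (1/2)^k"
        unfolding split by (rule order_trans[OF norm_triangle_ineq4]) (use c1 c2 in simp)
    qed
  qed
  have AEfg: "AE x in M. f x - g x = 0"
    using spec[OF compl, of "\<lambda>x. f x - g x"] hperp hsq by simp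
  have lowb: "A - (1/4)^k \<le> sum w (F k)" for k
  proof -
    have "N2 (\<lambda>x. f x - G k x) = N2 (\<lambda>x. g x - G k x)"
      unfolding N2_def using AEfg by (intro nn_integral_cong_AE) auto
    also have "\<dots> \<le> ennreal ((1/4)^k)" using Ng[of k] by (simp add: q4)
    finally have "ennreal (\<integral>x. (cmod (f x - G k x))\<^sup>2 \<partial>M) \<le> ennreal ((1/4)^k)"
      using N2_bnd[OF bnd_diff[OF f bG[of k]]] by simp
    then have "(\<integral>x. (cmod (f x - G k x))\<^sup>2 \<partial>M) \<le> (1/4)^k" by (simp add: ennreal_le_iff)
    moreover have "(\<integral>x. (cmod (f x - G k x))\<^sup>2 \<partial>M) = A - sum w (F k)"
      unfolding G_def A_def w_def using Ffin FL by (intro expand_self f) auto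
    ultimately show ?thesis by simp
  qed
  have "A \<le> S"
  proof (rule ccontr)
    assume "\<not> A \<le> S"
    then have "A - S > 0" by simp
    from real_arch_pow_inv[OF this, of "1/4"] obtain k where "(1/4::real)^k < A - S" by auto
    with lowb[of k] fin_le[OF Ffin FL, of k] show False by simp
  qed
  with SA have "S = A" by simp
  then show ?thesis using has_sum_infsum[OF summ] unfolding S_def A_def w_def by simp
qed

end



lemma tau_cont: "continuous_on UNIV (tau R b)"
  unfolding tau_def divide_inverse by (intro continuous_intros)

lemma tau_meas[measurable]: "tau R b \<in> borel_measurable borel"
  by (rule borel_measurable_continuous_onI[OF tau_cont])

locale ifs = prob_space M for M :: "real measure" +
  fixes R :: real and B :: "real set" and p :: "real \<Rightarrow> real" and X :: "real set"
  assumes R: "\<bar>R\<bar> > 1"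
    and Bfin: "finite B"
    and pB: "\<forall>b\<in>B. 0 < p b \<and> p b < 1" and psum: "(\<Sum>b\<in>B. p b) = 1"
    and X: "ifs_attractor R B X"
    and mu: "ifs_invariant_measure R B p M"
begin

lemma sets_M[measurable_cong]: "sets M = sets borel" using mu unfolding ifs_invariant_measure_def by auto
lemma space_M[simp]: "space M = UNIV" using sets_eq_imp_space_eq[OF sets_M] by simp

lemma inv: "continuous_on UNIV f \<Longrightarrow> (\<integral>x. f x \<partial>M) = (\<Sum>b\<in>B. p b * (\<integral>x. f (tau R b x) \<partial>M))"
  using mu unfolding ifs_invariant_measure_def by auto

lemma tau_vimage[measurable]: "A \<in> sets borel \<Longrightarrow> tau R b -` A \<in> sets borel"
  using measurable_sets[OF tau_meas, of A] by simp

definition "phi a (n::nat) x = max 0 (min 1 (1 - real (Suc n) * (x - a)))"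

lemma phi_cont: "continuous_on UNIV (phi a n)"
  unfolding phi_def by (intro continuous_intros)

lemma phi_lim: "(\<lambda>n. phi a n x) \<longlonglongrightarrow> indicator {..a} x"
proof (cases "x \<le> a")
  case True
  then have "phi a n x = 1" for n
    unfolding phi_def using mult_nonneg_nonpos[of "real (Suc n)" "x - a"] by auto
  then show ?thesis using True by simp
next
  case False
  then have xa: "x - a > 0" by simp
  obtain N where N: "1 < real N * (x - a)" using ex_less_of_nat_mult[OF xa] by auto
  have "eventually (\<lambda>n. phi a n x = 0) sequentially"
  proof (rule eventually_sequentiallyI[of N])
    fix n assume "N \<le> n"
    then have "real N * (x - a) \<le> real (Suc n) * (x - a)" using xa by (intro mult_right_mono) auto
    with N show "phi a n x = 0" unfolding phi_def by auto
  qed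
  then have "(\<lambda>n. phi a n x) \<longlonglongrightarrow> 0" by (rule tendsto_eventually)
  then show ?thesis using False by simp
qed

lemma phi_bound: "norm (phi a n x) \<le> 1" unfolding phi_def by auto

lemma int_lim:
  assumes g: "g \<in> borel_measurable borel"
  shows "(\<lambda>n. \<integral>x. phi a n (g x) \<partial>M) \<longlonglongrightarrow> measure M (g -` {..a})"
proof -
  have "(\<lambda>n. \<integral>x. phi a n (g x) \<partial>M) \<longlonglongrightarrow> (\<integral>x. indicator {..a} (g x) \<partial>M)"
  proof (rule integral_dominated_convergence[where w="\<lambda>_. 1"])
    show "(\<lambda>x. indicator {..a} (g x) :: real) \<in> borel_measurable M" using g by measurable
    show "(\<lambda>x. phi a n (g x)) \<in> borel_measurable M" for n
      using g borel_measurable_continuous_onI[OF phi_cont] by measurable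
    show "AE x in M. (\<lambda>n. phi a n (g x)) \<longlonglongrightarrow> indicator {..a} (g x)" by (intro AE_I2 phi_lim)
    show "AE x in M. norm (phi a n (g x)) \<le> 1" for n by (intro AE_I2 phi_bound)
  qed simp
  also have "(\<integral>x. indicator {..a} (g x) \<partial>M) = (\<integral>x. indicator (g -` {..a}) x \<partial>M)"
    by (simp add: indicator_def)
  also have "\<dots> = measure M (g -` {..a})" by simp
  finally show ?thesis .
qed

lemma M1: assumes A: "A \<in> sets borel"
  shows "measure M A = (\<Sum>b\<in>B. p b * measure M (tau R b -` A))"
proof -
  have Is: "Int_stable (range (\<lambda>a::real. {..a}))" by (auto simp: Int_stable_def)
  have "sets borel = sigma_sets UNIV (range (\<lambda>a::real. {..a}))"
    by (subst borel_eq_atMost) (simp add: sets_measure_of)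
  with A have Asig: "A \<in> sigma_sets UNIV (range (\<lambda>a::real. {..a}))" by simp
  have Pw: "range (\<lambda>a::real. {..a}) \<subseteq> Pow UNIV" by auto
  from Is Pw Asig show ?thesis
  proof (induction rule: sigma_sets_induct_disjoint)
    case (basic A)
    then obtain a where a: "A = {..a}" by auto
    have "(\<lambda>n. \<integral>x. phi a n x \<partial>M) \<longlonglongrightarrow> measure M (id -` {..a})"
      using int_lim[of id a] by simp
    moreover have "(\<lambda>n. \<integral>x. phi a n x \<partial>M) = (\<lambda>n. \<Sum>b\<in>B. p b * (\<integral>x. phi a n (tau R b x) \<partial>M))"
      by (intro ext inv phi_cont)
    moreover have "(\<lambda>n. \<Sum>b\<in>B. p b * (\<integral>x. phi a n (tau R b x) \<partial>M)) \<longlonglongrightarrow> (\<Sum>b\<in>B. p b * measure M (tau R b -` {..a}))"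
      by (intro tendsto_sum tendsto_mult_left int_lim tau_meas)
    ultimately show ?case unfolding a using LIMSEQ_unique by fastforce
  next
    case empty then show ?case by simp
  next
    case (compl A)
    have As: "A \<in> sets borel" using compl(1) \<open>sets borel = _\<close> by simp
    have "measure M (UNIV - A) = 1 - measure M A" using prob_compl[of A] As by simp
    also have "\<dots> = (\<Sum>b\<in>B. p b) - (\<Sum>b\<in>B. p b * measure M (tau R b -` A))" using compl psum by simp
    also have "\<dots> = (\<Sum>b\<in>B. p b * measure M (tau R b -` (UNIV - A)))"
    proof -
      have h: "measure M (tau R b -` (UNIV - A)) = 1 - measure M (tau R b -` A)" for b
        using prob_compl[of "tau R b -` A"] As by (simp add: vimage_Diff)
      have "(\<Sum>b\<in>B. p b * measure M (tau R b -` (UNIV - A))) = (\<Sum>b\<in>B. p b - p b * measure M (tau R b -` A))"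
        by (intro sum.cong refl) (simp only: h right_diff_distrib mult_1_right)
      then show ?thesis by (simp add: sum_subtractf)
    qed
    finally show ?case .
  next
    case (union A)
    have As: "A i \<in> sets borel" for i using union(2) \<open>sets borel = _\<close> by auto
    have s1: "(\<lambda>i. measure M (A i)) sums measure M (\<Union>i. A i)"
      using As union(1) by (intro finite_measure_UNION) auto
    have s2: "(\<lambda>i. measure M (tau R b -` A i)) sums measure M (tau R b -` (\<Union>i. A i))" for b
    proof -
      have "disjoint_family (\<lambda>i. tau R b -` A i)"
        using union(1) unfolding disjoint_family_on_def by auto
      then show ?thesis using As by (simp add: vimage_UN) (intro finite_measure_UNION, auto)
    qed
    have "(\<lambda>i. \<Sum>b\<in>B. p b * measure M (tau R b -` A i)) sums (\<Sum>b\<in>B. p b * measure M (tau R b -` (\<Union>i. A i)))"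
      by (intro sums_sum sums_mult s2)
    then have "(\<lambda>i. measure M (A i)) sums (\<Sum>b\<in>B. p b * measure M (tau R b -` (\<Union>i. A i)))"
      using union(3) by simp
    with s1 show ?case using sums_unique2 by blast
  qed
qed

lemma Xne: "X \<noteq> {}" and Xcpt: "compact X" and Xeq: "X = (\<Union>b\<in>B. tau R b ` X)"
  using X unfolding ifs_attractor_def by auto

lemma Xcl: "closed X" using Xcpt by (rule compact_imp_closed)

lemma tauX: "b \<in> B \<Longrightarrow> tau R b ` X \<subseteq> X" using Xeq by blast

lemma Rnz: "R \<noteq> 0" using R by auto

lemma dist_tau: "dist (tau R b x) (tau R b y) = dist x y / \<bar>R\<bar>"
  unfolding tau_def dist_real_def by (simp add: diff_divide_distrib[symmetric] abs_divide)

lemma infd_meas[measurable]: "(\<lambda>x. infdist x X) \<in> borel_measurable borel"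
  by (intro borel_measurable_continuous_onI continuous_intros)

lemma infd_tau: assumes b: "b \<in> B" shows "\<bar>R\<bar> * infdist (tau R b x) X \<le> infdist x X"
proof -
  have "\<bar>R\<bar> * infdist (tau R b x) X \<le> dist x y" if y: "y \<in> X" for y
  proof -
    have "infdist (tau R b x) X \<le> dist (tau R b x) (tau R b y)"
      using tauX[OF b] y by (intro infdist_le) auto
    also have "\<dots> = dist x y / \<bar>R\<bar>" by (rule dist_tau)
    finally show ?thesis using R by (simp add: field_simps)
  qed
  then show ?thesis unfolding infdist_notempty[OF Xne] by (intro cINF_greatest Xne) auto
qed

definition "Dset t = {x. t \<le> infdist x X}"

lemma Dset_meas[measurable]: "Dset t \<in> sets borel"
  unfolding Dset_def by measurable

lemma Dset_step: "measure M (Dset t) \<le> measure M (Dset (\<bar>R\<bar> * t))"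
proof -
  have "measure M (Dset t) = (\<Sum>b\<in>B. p b * measure M (tau R b -` Dset t))" by (rule M1) simp
  also have "\<dots> \<le> (\<Sum>b\<in>B. p b * measure M (Dset (\<bar>R\<bar> * t)))"
  proof (intro sum_mono mult_left_mono)
    fix b assume b: "b \<in> B"
    show "0 \<le> p b" using pB b by auto
    have "tau R b -` Dset t \<subseteq> Dset (\<bar>R\<bar> * t)"
    proof
      fix x assume "x \<in> tau R b -` Dset t"
      then have "t \<le> infdist (tau R b x) X" unfolding Dset_def by auto
      then have "\<bar>R\<bar> * t \<le> \<bar>R\<bar> * infdist (tau R b x) X" using R by (intro mult_left_mono) auto
      with infd_tau[OF b, of x] show "x \<in> Dset (\<bar>R\<bar> * t)" unfolding Dset_def by auto
    qed
    then show "measure M (tau R b -` Dset t) \<le> measure M (Dset (\<bar>R\<bar> * t))"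
      by (intro finite_measure_mono) auto
  qed
  also have "\<dots> = measure M (Dset (\<bar>R\<bar> * t))" using psum by (simp add: sum_distrib_right[symmetric])
  finally show ?thesis .
qed

lemma Dset_iter: "measure M (Dset t) \<le> measure M (Dset (\<bar>R\<bar>^n * t))"
proof (induction n)
  case (Suc n)
  then show ?case using Dset_step[of "\<bar>R\<bar>^n * t"] by (simp add: mult.assoc)
qed simp

lemma Dset_zero: assumes t: "t > 0" shows "measure M (Dset t) = 0"
proof -
  have dec: "decseq (\<lambda>n. Dset (\<bar>R\<bar>^n * t))"
  proof (rule decseq_SucI)
    fix n
    have "\<bar>R\<bar>^n \<le> \<bar>R\<bar>^Suc n" by (rule power_increasing) (use R in auto)
    then have "\<bar>R\<bar>^n * t \<le> \<bar>R\<bar>^Suc n * t" using t by (intro mult_right_mono) auto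
    then show "Dset (\<bar>R\<bar>^Suc n * t) \<subseteq> Dset (\<bar>R\<bar>^n * t)" unfolding Dset_def by auto
  qed
  have empty: "(\<Inter>n. Dset (\<bar>R\<bar>^n * t)) = {}"
  proof -
    have "x \<notin> (\<Inter>n. Dset (\<bar>R\<bar>^n * t))" for x
    proof -
      obtain n where n: "infdist x X / t < \<bar>R\<bar>^n" using real_arch_pow[OF R] by auto
      then have "infdist x X < \<bar>R\<bar>^n * t" using t by (simp add: field_simps)
      then show ?thesis unfolding Dset_def by (auto simp: not_le)
    qed
    then show ?thesis by auto
  qed
  have "(\<lambda>n. measure M (Dset (\<bar>R\<bar>^n * t))) \<longlonglongrightarrow> measure M (\<Inter>n. Dset (\<bar>R\<bar>^n * t))"
    by (rule finite_Lim_measure_decseq[OF _ dec]) auto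
  then have "(\<lambda>n. measure M (Dset (\<bar>R\<bar>^n * t))) \<longlonglongrightarrow> 0" unfolding empty by simp
  then have "measure M (Dset t) \<le> 0"
    by (rule LIMSEQ_le_const) (auto intro: Dset_iter)
  then show ?thesis using measure_nonneg[of M "Dset t"] by linarith
qed

lemma AEX: "AE x in M. x \<in> X"
proof -
  have "AE x in M. x \<notin> Dset (1 / Suc n)" for n
    by (rule AE_I[of _ _ "Dset (1 / Suc n)"]) (auto simp: emeasure_eq_measure Dset_zero)
  then have "AE x in M. \<forall>n. x \<notin> Dset (1 / Suc n)" by (simp add: AE_all_countable)
  then show ?thesis
  proof eventually_elim
    case (elim x)
    show "x \<in> X"
    proof (rule ccontr)
      assume "x \<notin> X"
      then have "infdist x X > 0" by (intro infdist_pos_not_in_closed Xcl Xne)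
      then obtain n where n: "n > 0" "inverse (real n) < infdist x X" using ex_inverse_of_nat_less by blast
      then have "1 / real (Suc (n - 1)) \<le> infdist x X" by (simp add: field_simps)
      with elim[rule_format, of "n - 1"] show False unfolding Dset_def by auto
    qed
  qed
qed

end



context ifs begin

definition "Aset b = tau R b ` X"

lemma Aset_closed: "closed (Aset b)"
  unfolding Aset_def
  by (intro compact_imp_closed compact_continuous_image continuous_on_subset[OF tau_cont] Xcpt) auto

lemma Aset_meas[measurable]: "Aset b \<in> sets borel"
  using Aset_closed by (rule borel_closed)

lemma tauA: "x \<in> X \<Longrightarrow> tau R c x \<in> Aset c" unfolding Aset_def by auto

declare sets_M[simp]

lemma M3:
  assumes no_overlap: "\<forall>b\<in>B. \<forall>b'\<in>B. b \<noteq> b' \<longrightarrow> measure M (tau R b ` X \<inter> tau R b' ` X) = 0"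
    and b: "b \<in> B" and E: "E \<in> sets borel"
  shows "measure M (E \<inter> Aset b) = p b * measure M (tau R b -` E)"
proof -
  have zero: "measure M (tau R c -` Aset b) = 0" if c: "c \<in> B" "c \<noteq> b" for c
  proof -
    have "measure M (Aset b \<inter> Aset c) = 0" using no_overlap b c unfolding Aset_def by auto
    then have "(\<Sum>d\<in>B. p d * measure M (tau R d -` (Aset b \<inter> Aset c))) = 0"
      using M1[of "Aset b \<inter> Aset c"] by simp
    then have "\<forall>d\<in>B. p d * measure M (tau R d -` (Aset b \<inter> Aset c)) = 0"
      using pB by (subst (asm) sum_nonneg_eq_0_iff) (auto simp: Bfin)
    then have z: "measure M (tau R c -` (Aset b \<inter> Aset c)) = 0" using c pB by force
    have "measure M (tau R c -` Aset b) = measure M (tau R c -` (Aset b \<inter> Aset c))"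
      apply (rule measure_eq_AE)
      using AEX apply (auto elim!: eventually_mono intro: tauA)[1]
      by measurable
    with z show ?thesis by simp
  qed
  have "measure M (E \<inter> Aset b) = (\<Sum>c\<in>B. p c * measure M (tau R c -` (E \<inter> Aset b)))"
    using E by (intro M1 sets.Int Aset_meas)
  also have "\<dots> = (\<Sum>c\<in>B. if c = b then p b * measure M (tau R b -` E) else 0)"
  proof (intro sum.cong refl)
    fix c assume c: "c \<in> B"
    show "p c * measure M (tau R c -` (E \<inter> Aset b)) = (if c = b then p b * measure M (tau R b -` E) else 0)"
    proof (cases "c = b")
      case True
      have "measure M (tau R b -` (E \<inter> Aset b)) = measure M (tau R b -` E)"
        apply (rule measure_eq_AE)
        using AEX apply (auto elim!: eventually_mono intro: tauA)[1]
        using E by measurable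
      then show ?thesis using True by simp
    next
      case False
      have "measure M (tau R c -` (E \<inter> Aset b)) \<le> measure M (tau R c -` Aset b)"
        using E by (intro finite_measure_mono) auto
      then have "measure M (tau R c -` (E \<inter> Aset b)) = 0"
        using zero[OF c False] measure_nonneg[of M "tau R c -` (E \<inter> Aset b)"] by linarith
      then show ?thesis using False by simp
    qed
  qed
  also have "\<dots> = p b * measure M (tau R b -` E)" using b Bfin by simp
  finally show ?thesis .
qed

lemma M4:
  fixes h :: "real \<Rightarrow> complex"
  assumes no_overlap: "\<forall>b\<in>B. \<forall>b'\<in>B. b \<noteq> b' \<longrightarrow> measure M (tau R b ` X \<inter> tau R b' ` X) = 0"
    and b: "b \<in> B" and h[measurable]: "h \<in> borel_measurable borel"
  shows "(\<integral>x. indicator (Aset b) x *\<^sub>R h x \<partial>M) = p b *\<^sub>R (\<integral>x. h (tau R b x) \<partial>M)"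
proof -
  have pb: "0 \<le> p b" using pB b by auto
  have eq: "density M (\<lambda>x. ennreal (indicator (Aset b) x)) = density (distr M borel (tau R b)) (\<lambda>_. ennreal (p b))"
  proof (rule measure_eqI)
    show "sets (density M (\<lambda>x. ennreal (indicator (Aset b) x))) = sets (density (distr M borel (tau R b)) (\<lambda>_. ennreal (p b)))"
      by (simp add: sets_M)
    fix E assume "E \<in> sets (density M (\<lambda>x. ennreal (indicator (Aset b) x)))"
    then have E[measurable]: "E \<in> sets borel" by simp
    have "emeasure (density M (\<lambda>x. ennreal (indicator (Aset b) x))) E = emeasure M (E \<inter> Aset b)"
      by (subst emeasure_density) (auto intro!: nn_integral_cong simp: indicator_def simp flip: nn_integral_indicator)
    also have "\<dots> = ennreal (p b * measure M (tau R b -` E))"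
      by (simp add: emeasure_eq_measure M3[OF no_overlap b E])
    also have "\<dots> = emeasure (density (distr M borel (tau R b)) (\<lambda>_. ennreal (p b))) E"
      by (simp add: emeasure_density_const emeasure_distr emeasure_eq_measure ennreal_mult pb)
    finally show "emeasure (density M (\<lambda>x. ennreal (indicator (Aset b) x))) E = emeasure (density (distr M borel (tau R b)) (\<lambda>_. ennreal (p b))) E" .
  qed
  have "(\<integral>x. indicator (Aset b) x *\<^sub>R h x \<partial>M) = integral\<^sup>L (density M (\<lambda>x. ennreal (indicator (Aset b) x))) h"
    by (rule integral_density[symmetric]) auto
  also have "\<dots> = integral\<^sup>L (density (distr M borel (tau R b)) (\<lambda>_. ennreal (p b))) h"
    unfolding eq ..
  also have "\<dots> = (\<integral>x. p b *\<^sub>R h x \<partial>distr M borel (tau R b))"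
    by (rule integral_density) (auto simp: pb)
  also have "\<dots> = p b *\<^sub>R (\<integral>x. h (tau R b x) \<partial>M)"
    by (simp add: integral_distr)
  finally show ?thesis .
qed

end



lemma e_exp_norm[simp]: "cmod (e_exp l x) = 1"
  unfolding e_exp_def by (simp add: norm_exp_eq_Re)

lemma e_exp_cont: "continuous_on UNIV (e_exp l)"
  unfolding e_exp_def by (intro continuous_intros)

lemma e_exp_meas[measurable]: "e_exp l \<in> borel_measurable borel"
  by (rule borel_measurable_continuous_onI[OF e_exp_cont])

lemma e_exp_tau: "R \<noteq> 0 \<Longrightarrow> e_exp l (tau R b x) = e_exp (l / R) x * e_exp (l / R) b"
  unfolding e_exp_def tau_def by (simp add: exp_add[symmetric] algebra_simps add_divide_distrib)

theorem proposition3p3: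
  fixes R :: real and B :: "real set" and p :: "real \<Rightarrow> real"
    and X :: "real set" and \<mu> :: "real measure"
  assumes R: "\<bar>R\<bar> > 1"
    and B: "finite B" "0 \<in> B"
    and p: "\<forall>b\<in>B. 0 < p b \<and> p b < 1" "(\<Sum>b\<in>B. p b) = 1"
    and X: "ifs_attractor R B X"
    and mu: "ifs_invariant_measure R B p \<mu>"
    and spec: "spectral_measure \<mu>"
    and no_overlap: "\<forall>b\<in>B. \<forall>b'\<in>B. b \<noteq> b' \<longrightarrow>
                       measure \<mu> (tau R b ` X \<inter> tau R b' ` X) = 0"
  shows "\<forall>b\<in>B. p b = 1 / real (card B)"
proof -
  have P: "prob_space \<mu>" using mu unfolding ifs_invariant_measure_def by auto
  interpret I: ifs \<mu> R B p X
    by (intro ifs.intro P ifs_axioms.intro) (use assms in auto)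
  from spec obtain \<Lambda> where
    orth: "\<forall>l\<in>\<Lambda>. \<forall>l'\<in>\<Lambda>. l \<noteq> l' \<longrightarrow> (\<integral>x. e_exp l x * cnj (e_exp l' x) \<partial>\<mu>) = 0" and
    compl: "\<forall>f :: real \<Rightarrow> complex. f \<in> borel_measurable \<mu> \<and> integrable \<mu> (\<lambda>x. (cmod (f x))\<^sup>2) \<and>
            (\<forall>l\<in>\<Lambda>. (\<integral>x. f x * cnj (e_exp l x) \<partial>\<mu>) = 0) \<longrightarrow> (AE x in \<mu>. f x = 0)"
    unfolding spectral_measure_def by blast
  interpret O: onb \<mu> e_exp \<Lambda>
    by (intro onb.intro P onb_axioms.intro orth) auto
  define \<psi> where "\<psi> l = (\<integral>x. cnj (e_exp (l / R) x) \<partial>\<mu>)" for l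
  have key: "((\<lambda>l. (cmod (\<psi> l))\<^sup>2) has_sum (1 / p b)) \<Lambda>" if b: "b \<in> B" for b
  proof -
    have pb: "0 < p b" using p b by auto
    define f where "f x = complex_of_real (indicator (I.Aset b) x)" for x
    have bf: "I.bnd f" unfolding I.bnd_def f_def by (auto simp: indicator_def)
    have "((\<lambda>l. (cmod (O.co f l))\<^sup>2) has_sum (\<integral>x. (cmod (f x))\<^sup>2 \<partial>\<mu>)) \<Lambda>"
      by (rule O.parseval[OF compl bf])
    moreover have "(\<integral>x. (cmod (f x))\<^sup>2 \<partial>\<mu>) = p b"
    proof -
      have "(\<integral>x. (cmod (f x))\<^sup>2 \<partial>\<mu>) = (\<integral>x. indicator (I.Aset b) x \<partial>\<mu>)"
        unfolding f_def by (intro Bochner_Integration.integral_cong) (auto simp: indicator_def)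
      also have "\<dots> = measure \<mu> (UNIV \<inter> I.Aset b)" by simp
      also have "\<dots> = p b" using I.M3[OF no_overlap b, of UNIV] I.prob_space by simp
      finally show ?thesis .
    qed
    moreover have "(cmod (O.co f l))\<^sup>2 = (p b)\<^sup>2 * (cmod (\<psi> l))\<^sup>2" for l
    proof -
      have "O.co f l = (\<integral>x. indicator (I.Aset b) x *\<^sub>R cnj (e_exp l x) \<partial>\<mu>)"
        unfolding O.co_def f_def by (simp add: scaleR_conv_of_real)
      also have "\<dots> = p b *\<^sub>R (\<integral>x. cnj (e_exp l (tau R b x)) \<partial>\<mu>)"
        by (rule I.M4[OF no_overlap b]) measurable
      also have "(\<integral>x. cnj (e_exp l (tau R b x)) \<partial>\<mu>) = (\<integral>x. cnj (e_exp (l / R) b) * cnj (e_exp (l / R) x) \<partial>\<mu>)"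
        using I.Rnz by (simp add: e_exp_tau mult.commute)
      also have "\<dots> = cnj (e_exp (l / R) b) * \<psi> l" unfolding \<psi>_def by simp
      finally have "O.co f l = p b *\<^sub>R (cnj (e_exp (l / R) b) * \<psi> l)" .
      then have "cmod (O.co f l) = p b * cmod (\<psi> l)" using pb by (simp add: norm_mult)
      then show ?thesis by (simp add: power_mult_distrib)
    qed
    ultimately have "((\<lambda>l. (p b)\<^sup>2 * (cmod (\<psi> l))\<^sup>2) has_sum p b) \<Lambda>" by simp
    then have "((\<lambda>l. (cmod (\<psi> l))\<^sup>2) has_sum (p b / (p b)\<^sup>2)) \<Lambda>"
      using pb by (subst (asm) has_sum_cmult_right_iff) auto
    then show ?thesis using pb by (simp add: power2_eq_square)
  qed
  have eq: "p b = p 0" if b: "b \<in> B" for b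
  proof -
    have "1 / p b = 1 / p 0" using has_sum_unique[OF key[OF b] key[OF B(2)]] .
    then show ?thesis by simp
  qed
  have "(\<Sum>b\<in>B. p b) = real (card B) * p 0" using eq by simp
  with p(2) have c: "real (card B) * p 0 = 1" by simp
  then have "card B > 0" by (cases "card B") auto
  with c have "p 0 = 1 / real (card B)" by (simp add: field_simps)
  with eq show ?thesis by auto
qed


end
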